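(* Let $v_1,\dots,v_N,\tilde v$ be independent uniform templates in $\mathbb{Z}_2^n$ and $\varepsilon\ge0$. Let $\overline{W_N}$ denote the event "$v_2\notin B_\varepsilon(v_1),\ v_3\notin B_\varepsilon(v_1)\cup B_\varepsilon(v_2),\ \dots,\ v_N\notin\bigcup_{k=1}^{N-1}B_\varepsilon(v_k)$". Then $$NV_\varepsilon-\mathcal{I}^\varepsilon_{\varepsilon+1}\frac{N(N-1)}{2}\le\mathbb{P}\left(\tilde v\in\bigcup_{k=1}^N B_\varepsilon(v_k)\,\middle|\,\overline{W_N}\right)\le NV_\varepsilon.$$
   Context: $d_{\mathcal H}$ is the Hamming distance on $\mathbb{Z}_2^n$, $B_\varepsilon(t)=\{y:d_{\mathcal H}(t,y)\le\varepsilon\}$, $V_\varepsilon=\frac1{2^n}\sum_{k=0}^\varepsilon\binom nk$, and $\mathcal{I}^\varepsilon_d=|B_\varepsilon(u)\cap B_\varepsilon(v)|/2^n$ for any $u,v$ with $d_{\mathcal H}(u,v)=d$, explicitly $\mathcal{I}^\varepsilon_d=\frac{1}{2^n}\sum_{k=\max(0,d-\varepsilon)}^{\min(\varepsilon,d)}\sum_{i=0}^{\min(\varepsilon-k,\varepsilon-d+k)}\binom dk\binom{n-d}{i}$. *)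

theory Defs
  imports "HOL-Probability.Probability"
begin

text \<open>Z_2^n is modelled as boolean lists of length n.\<close>

definition cube :: "nat \<Rightarrow> bool list set" where
  "cube n = {xs. length xs = n}"

definition hamming :: "bool list \<Rightarrow> bool list \<Rightarrow> nat" where
  "hamming xs ys = card {i. i < length xs \<and> xs ! i \<noteq> ys ! i}"

definition hball :: "nat \<Rightarrow> bool list \<Rightarrow> bool list set" where
  "hball eps t = {y. length y = length t \<and> hamming t y \<le> eps}"

definition Vol :: "nat \<Rightarrow> nat \<Rightarrow> real" where
  "Vol n eps = (\<Sum>k=0..eps. real (n choose k)) / 2 ^ n"

text \<open>I^eps_d = |B_eps(u) \<inter> B_eps(v)| / 2^n for a pair u, v at distance d
  (canonical representative pair: u = 0...0, v = 1..10..0 with d ones).\<close>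
definition Isec :: "nat \<Rightarrow> nat \<Rightarrow> nat \<Rightarrow> real" where
  "Isec n eps d = real (card (hball eps (replicate n False)
        \<inter> hball eps (replicate d True @ replicate (n - d) False))) / 2 ^ n"

definition templ_space :: "nat \<Rightarrow> nat \<Rightarrow> ((nat \<Rightarrow> bool list) \<times> bool list) set" where
  "templ_space n N = (PiE {1..N} (\<lambda>_. cube n)) \<times> cube n"

definition noWN :: "nat \<Rightarrow> nat \<Rightarrow> (nat \<Rightarrow> bool list) \<Rightarrow> bool" where
  "noWN eps N vs = (\<forall>k\<in>{2..N}. \<forall>j\<in>{1..<k}. vs k \<notin> hball eps (vs j))"

end

theory Submission
  imports Defs
begin

lemma hamming_sym: "length a = length b \<Longrightarrow> hamming a b = hamming b a"
  proof -
  assume "length a = length b"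
  then have "{i. i < length a \<and> a ! i \<noteq> b ! i} = {i. i < length b \<and> b ! i \<noteq> a ! i}" by auto
  then show ?thesis unfolding hamming_def by simp
qed

lemma hamming_le: "hamming a b \<le> length a"
proof -
  have "{i. i < length a \<and> a ! i \<noteq> b ! i} \<subseteq> {0..<length a}" by auto
  then have "card {i. i < length a \<and> a ! i \<noteq> b ! i} \<le> card {0..<length a}" by (intro card_mono) auto
  then show ?thesis unfolding hamming_def by simp
qed

lemma hamming_upd:
  assumes "length a = length b" "i < length b"
  shows "int (hamming a (b[i:=c])) = int (hamming a b) - (if a!i \<noteq> b!i then 1 else 0) + (if a!i \<noteq> c then 1 else 0)"
proof -
  define D where "D = {j. j < length a \<and> a ! j \<noteq> b ! j}"
  define D' where "D' = {j. j < length a \<and> a ! j \<noteq> b[i:=c] ! j}"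
  have fD: "finite D" "finite D'" unfolding D_def D'_def by auto
  have e: "D - {i} = D' - {i}" unfolding D_def D'_def by auto
  have "card D = card (D - {i}) + (if i \<in> D then 1 else 0)"
  proof (cases "i \<in> D")
    case True then show ?thesis using fD card_Suc_Diff1[of D i] by simp
  next
    case False then show ?thesis by simp
  qed
  moreover have "card D' = card (D' - {i}) + (if i \<in> D' then 1 else 0)"
  proof (cases "i \<in> D'")
    case True then show ?thesis using fD card_Suc_Diff1[of D' i] by simp
  next
    case False then show ?thesis by simp
  qed
  moreover have "i \<in> D \<longleftrightarrow> a!i \<noteq> b!i" "i \<in> D' \<longleftrightarrow> a!i \<noteq> c" using assms unfolding D_def D'_def by auto
  ultimately show ?thesis unfolding hamming_def D_def[symmetric] D'_def[symmetric] e by auto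
qed

lemma card_hball:
  assumes "length x = n"
  shows "card (hball e x) = (\<Sum>k=0..e. n choose k)"
proof -
  define f where "f = (\<lambda>y::bool list. {i. i < n \<and> x!i \<noteq> y!i})"
  define S where "S = {T. T \<subseteq> {0..<n} \<and> card T \<le> e}"
  have hf: "hamming x y = card (f y)" for y unfolding hamming_def f_def using assms by simp
  have "bij_betw f (hball e x) S"
  proof (rule bij_betw_imageI)
    show "inj_on f (hball e x)"
    proof
      fix y z assume y: "y \<in> hball e x" and z: "z \<in> hball e x" and fe: "f y = f z"
      show "y = z"
      proof (rule nth_equalityI)
        show "length y = length z" using y z assms by (simp add: hball_def)
        fix i assume "i < length y"
        then have "i < n" using y assms by (simp add: hball_def)
        then have "(x!i \<noteq> y!i) = (x!i \<noteq> z!i)" using fe unfolding f_def by blast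
        then show "y!i = z!i" by auto
      qed
    qed
    show "f ` hball e x = S"
    proof
      show "f ` hball e x \<subseteq> S" unfolding S_def hball_def using hf assms by (auto simp: f_def)
      show "S \<subseteq> f ` hball e x"
      proof
        fix T assume T: "T \<in> S"
        define y where "y = map (\<lambda>i. if i \<in> T then \<not> x!i else x!i) [0..<n]"
        have "f y = T" using T unfolding f_def y_def S_def by auto
        moreover have "y \<in> hball e x" using T \<open>f y = T\<close> hf assms unfolding hball_def S_def y_def by auto
        ultimately show "T \<in> f ` hball e x" by blast
      qed
    qed
  qed
  then have "card (hball e x) = card S" by (rule bij_betw_same_card)
  also have "S = (\<Union>k\<in>{0..e}. {T. T \<subseteq> {0..<n} \<and> card T = k})" unfolding S_def by auto
  also have "card \<dots> = (\<Sum>k=0..e. card {T. T \<subseteq> {0..<n} \<and> card T = k})"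
    by (rule card_UN_disjoint) auto
  also have "\<dots> = (\<Sum>k=0..e. n choose k)" by (simp add: n_subsets)
  finally show ?thesis .
qed


lemma finite_hball: "finite (hball e u)"
proof -
  have "hball e u \<subseteq> {xs. set xs \<subseteq> UNIV \<and> length xs = length u}" unfolding hball_def by auto
  then show ?thesis using finite_lists_length_eq[of "UNIV::bool set"] finite_subset by fastforce
qed

lemma ball_int_mono:
  assumes lu: "length u = n" "length v = n" "i < n" "u!i \<noteq> v!i"
  shows "card (hball e u \<inter> hball e v) \<le> card (hball e u \<inter> hball e (v[i := u!i]))"
proof -
  define v' where "v' = v[i := u!i]"
  define S where "S = hball e u \<inter> hball e v"
  define S' where "S' = hball e u \<inter> hball e v'"
  define fl where "fl = (\<lambda>y::bool list. y[i := \<not> y!i])"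
  define f where "f = (\<lambda>y. if y \<in> S' then y else fl y)"
  have lv': "length v' = n" "v'!i = u!i" using lu by (auto simp: v'_def)
  have key: "fl y \<in> S' \<and> fl y \<notin> S" if y: "y \<in> S" "y \<notin> S'" for y
  proof -
    have ly: "length y = n" using y lu by (auto simp: S_def hball_def)
    have h1: "hamming u y \<le> e" "hamming v y \<le> e" using y lu ly by (auto simp: S_def hball_def)
    have h2: "\<not> hamming v' y \<le> e" using y lu ly lv' h1 by (auto simp: S_def S'_def hball_def)
    have "int (hamming y v') = int (hamming y v) - (if y!i \<noteq> v!i then 1 else 0) + (if y!i \<noteq> u!i then 1 else 0)"
      unfolding v'_def using hamming_upd[of y v i "u!i"] ly lu by simp
    then have e1: "int (hamming v' y) = int (hamming v y) - (if y!i \<noteq> v!i then 1 else 0) + (if y!i \<noteq> u!i then 1 else 0)"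
      using hamming_sym[of y v'] hamming_sym[of y v] ly lu lv' by simp
    have e2: "int (hamming u (fl y)) = int (hamming u y) - (if u!i \<noteq> y!i then 1 else 0) + (if u!i \<noteq> (\<not> y!i) then 1 else 0)"
      unfolding fl_def using hamming_upd[of u y i "\<not> y!i"] ly lu by simp
    have e3: "int (hamming v' (fl y)) = int (hamming v' y) - (if u!i \<noteq> y!i then 1 else 0) + (if u!i \<noteq> (\<not> y!i) then 1 else 0)"
      unfolding fl_def using hamming_upd[of v' y i "\<not> y!i"] ly lu lv' by simp
    have e4: "int (hamming v (fl y)) = int (hamming v y) - (if v!i \<noteq> y!i then 1 else 0) + (if v!i \<noteq> (\<not> y!i) then 1 else 0)"
      unfolding fl_def using hamming_upd[of v y i "\<not> y!i"] ly lu by simp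
    have vi: "v!i = (\<not> u!i)" using lu by auto
    have "hamming u (fl y) \<le> e \<and> hamming v' (fl y) \<le> e \<and> \<not> hamming v (fl y) \<le> e"
      using e1 e2 e3 e4 h1 h2 vi by (cases "y!i"; cases "u!i") auto
    moreover have "length (fl y) = n" using ly by (simp add: fl_def)
    ultimately show ?thesis using lu lv' by (auto simp: S_def S'_def hball_def)
  qed
  have flfl: "fl (fl y) = y" for y unfolding fl_def by (cases "i < length y") (auto simp: list_update_beyond)
  have "inj_on f S"
  proof
    fix x y assume x: "x \<in> S" and y: "y \<in> S" and fe: "f x = f y"
    show "x = y"
    proof (cases "x \<in> S'"; cases "y \<in> S'")
      assume "x \<in> S'" "y \<in> S'" then show ?thesis using fe by (simp add: f_def)
    next
      assume "x \<in> S'" "y \<notin> S'" then show ?thesis using fe key[OF y] x by (simp add: f_def)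
    next
      assume "x \<notin> S'" "y \<in> S'" then show ?thesis using fe key[OF x] y by (simp add: f_def)
    next
      assume "x \<notin> S'" "y \<notin> S'" then show ?thesis using fe flfl by (metis f_def)
    qed
  qed
  moreover have "f ` S \<subseteq> S'" using key by (auto simp: f_def)
  moreover have "finite S'" unfolding S'_def using finite_hball by blast
  ultimately have "card S \<le> card S'" by (rule card_inj_on_le)
  then show ?thesis unfolding S_def S'_def v'_def .
qed


lemma ball_int_reduce:
  assumes "length u = n" "length v = n" "hamming u v = e + 1 + k"
  shows "\<exists>w. length w = n \<and> hamming u w = e + 1 \<and> card (hball e u \<inter> hball e v) \<le> card (hball e u \<inter> hball e w)"
  using assms(2,3)
proof (induction k arbitrary: v)
  case 0
  then show ?case by auto
next
  case (Suc k)
  have "{i. i < length u \<and> u ! i \<noteq> v ! i} \<noteq> {}"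
    using Suc.prems unfolding hamming_def by (metis add_Suc_right card.empty nat.distinct(1))
  then obtain i where i: "i < n" "u!i \<noteq> v!i" using assms(1) by auto
  define v' where "v' = v[i := u!i]"
  have "int (hamming u v') = int (hamming u v) - 1"
    using hamming_upd[of u v i "u!i"] i Suc.prems assms(1) by (simp add: v'_def)
  then have "hamming u v' = e + 1 + k" using Suc.prems by simp
  moreover have "length v' = n" using Suc.prems by (simp add: v'_def)
  ultimately obtain w where w: "length w = n" "hamming u w = e + 1"
    "card (hball e u \<inter> hball e v') \<le> card (hball e u \<inter> hball e w)" using Suc.IH by blast
  have "card (hball e u \<inter> hball e v) \<le> card (hball e u \<inter> hball e v')"
    unfolding v'_def using ball_int_mono[of u n v i e] assms(1) Suc.prems i by simp
  then have "card (hball e u \<inter> hball e v) \<le> card (hball e u \<inter> hball e w)" using w(3) by (rule order_trans)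
  then show ?case using w(1,2) by blast
qed

lemma ball_int_canon:
  assumes lu: "length u = n" and lw: "length w = n" and hd: "hamming u w = d"
  shows "card (hball e u \<inter> hball e w) \<le> card (hball e (replicate n False) \<inter> hball e (replicate d True @ replicate (n - d) False))"
proof -
  define D where "D = {i. i < n \<and> u!i \<noteq> w!i}"
  have cD: "card D = d" using hd lu unfolding D_def hamming_def by simp
  have Dsub: "D \<subseteq> {0..<n}" unfolding D_def by auto
  have fD: "finite D" using Dsub finite_subset by blast
  have dn: "d \<le> n" using cD Dsub by (metis card_atLeastLessThan card_mono finite_atLeastLessThan minus_nat.diff_0)
  obtain g where g: "bij_betw g {0..<d} D" using finite_same_card_bij[of "{0..<d}" D] fD cD by auto
  have "card ({0..<n} - D) = card {d..<n}" using Dsub cD fD by (simp add: card_Diff_subset)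
  then obtain h where h: "bij_betw h {d..<n} ({0..<n} - D)"
    using finite_same_card_bij[of "{d..<n}" "{0..<n} - D"] by auto
  define p where "p = (\<lambda>j. if j < d then g j else h j)"
  have "bij_betw p {0..<d} D" using g by (rule bij_betw_cong[THEN iffD1, rotated]) (simp add: p_def)
  moreover have "bij_betw p {d..<n} ({0..<n} - D)" using h by (rule bij_betw_cong[THEN iffD1, rotated]) (simp add: p_def)
  ultimately have "bij_betw p ({0..<d} \<union> {d..<n}) (D \<union> ({0..<n} - D))"
    by (rule bij_betw_combine) auto
  moreover have "{0..<d} \<union> {d..<n} = {0..<n}" using dn by auto
  moreover have "D \<union> ({0..<n} - D) = {0..<n}" using Dsub by auto
  ultimately have p: "bij_betw p {0..<n} {0..<n}" by simp
  have pD: "p j \<in> D \<longleftrightarrow> j < d" if "j < n" for j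
  proof (cases "j < d")
    case True then show ?thesis using g by (auto simp: p_def bij_betw_def)
  next
    case False then have "h j \<in> {0..<n} - D" using h that by (auto simp: bij_betw_def)
    then show ?thesis using False by (simp add: p_def)
  qed
  have pn: "p j < n" if "j < n" for j using p that by (auto simp: bij_betw_def)
  define phi where "phi = (\<lambda>y::bool list. map (\<lambda>j. y!(p j) \<noteq> u!(p j)) [0..<n])"
  have lphi: "length (phi y) = n" for y by (simp add: phi_def)
  have hphi: "hamming (phi a) (phi b) = hamming a b" if "length a = n" for a b
  proof -
    have "hamming (phi a) (phi b) = card {j. j < n \<and> a!(p j) \<noteq> b!(p j)}"
      unfolding hamming_def phi_def by (rule arg_cong[where f=card]) auto
    also have "\<dots> = card (p ` {j. j < n \<and> a!(p j) \<noteq> b!(p j)})"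
      by (rule card_image[symmetric], rule inj_on_subset[OF bij_betw_imp_inj_on[OF p]]) auto
    also have "p ` {j. j < n \<and> a!(p j) \<noteq> b!(p j)} = {i. i < n \<and> a!i \<noteq> b!i}"
    proof
      show "p ` {j. j < n \<and> a!(p j) \<noteq> b!(p j)} \<subseteq> {i. i < n \<and> a!i \<noteq> b!i}" using pn by auto
      show "{i. i < n \<and> a!i \<noteq> b!i} \<subseteq> p ` {j. j < n \<and> a!(p j) \<noteq> b!(p j)}"
      proof
        fix i assume i: "i \<in> {i. i < n \<and> a!i \<noteq> b!i}"
        then have "i \<in> p ` {0..<n}" using p by (simp add: bij_betw_def)
        then obtain j where "j < n" "i = p j" by auto
        then show "i \<in> p ` {j. j < n \<and> a!(p j) \<noteq> b!(p j)}" using i by auto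
      qed
    qed
    finally show ?thesis using that unfolding hamming_def by simp
  qed
  have phiu: "phi u = replicate n False" by (rule nth_equalityI) (auto simp: phi_def)
  have phiw: "phi w = replicate d True @ replicate (n - d) False"
  proof (rule nth_equalityI)
    show "length (phi w) = length (replicate d True @ replicate (n - d) False)" using dn by (simp add: lphi)
    fix j assume "j < length (phi w)"
    then have j: "j < n" by (simp add: lphi)
    have "phi w ! j = (p j \<in> D)" using j pn[OF j] by (auto simp: phi_def D_def)
    also have "\<dots> = (j < d)" using pD[OF j] .
    also have "\<dots> = (replicate d True @ replicate (n - d) False) ! j" using j dn by (auto simp: nth_append)
    finally show "phi w ! j = (replicate d True @ replicate (n - d) False) ! j" .
  qed
  have inj: "inj_on phi (hball e u \<inter> hball e w)"
  proof
    fix a b assume a: "a \<in> hball e u \<inter> hball e w" and b: "b \<in> hball e u \<inter> hball e w" and e: "phi a = phi b"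
    have la: "length a = n" "length b = n" using a b lu by (auto simp: hball_def)
    show "a = b"
    proof (rule nth_equalityI)
      show "length a = length b" using la by simp
      fix i assume "i < length a"
      then have "i \<in> p ` {0..<n}" using p la by (simp add: bij_betw_def)
      then obtain j where j: "j < n" "i = p j" by auto
      have "phi a ! j = phi b ! j" using e by simp
      then show "a!i = b!i" using j by (auto simp: phi_def)
    qed
  qed
  have img: "phi ` (hball e u \<inter> hball e w) \<subseteq> hball e (replicate n False) \<inter> hball e (replicate d True @ replicate (n - d) False)"
  proof
    fix z assume "z \<in> phi ` (hball e u \<inter> hball e w)"
    then obtain y where y: "y \<in> hball e u" "y \<in> hball e w" "z = phi y" by auto
    have ly: "length y = n" using y lu by (simp add: hball_def)
    have "hamming (phi u) (phi y) \<le> e" using hphi[OF lu] y by (simp add: hball_def)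
    moreover have "hamming (phi w) (phi y) \<le> e" using hphi[OF lw] y by (simp add: hball_def)
    ultimately show "z \<in> hball e (replicate n False) \<inter> hball e (replicate d True @ replicate (n - d) False)"
      using y(3) phiu phiw lphi dn by (auto simp: hball_def)
  qed
  show ?thesis by (rule card_inj_on_le[OF inj img]) (auto intro: finite_hball)
qed

lemma ball_int_bound:
  assumes "length u = n" "length v = n" "e < hamming u v"
  shows "real (card (hball e u \<inter> hball e v)) \<le> Isec n e (e + 1) * 2 ^ n"
proof -
  obtain w where w: "length w = n" "hamming u w = e + 1" "card (hball e u \<inter> hball e v) \<le> card (hball e u \<inter> hball e w)"
    using ball_int_reduce[of u n v e "hamming u v - (e + 1)"] assms by auto
  have "card (hball e u \<inter> hball e w) \<le> card (hball e (replicate n False) \<inter> hball e (replicate (e+1) True @ replicate (n - (e+1)) False))"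
    using ball_int_canon[OF assms(1) w(1,2)] .
  then show ?thesis using w(3) unfolding Isec_def by simp
qed


lemma bonf:
  fixes N :: nat and B :: "nat \<Rightarrow> 'a set"
  assumes "\<And>k. finite (B k)"
  shows "(\<Sum>k=1..N. real (card (B k))) - (\<Sum>k=1..N. \<Sum>j=1..<k. real (card (B j \<inter> B k)))
         \<le> real (card (\<Union>k\<in>{1..N}. B k))"
proof (induction N)
  case 0
  then show ?case by simp
next
  case (Suc N)
  define U where "U = (\<Union>k\<in>{1..N}. B k)"
  have fU: "finite U" using assms by (simp add: U_def)
  have eq: "(\<Union>k\<in>{1..Suc N}. B k) = U \<union> B (Suc N)" unfolding U_def by (auto simp: atLeastAtMostSuc_conv)
  have cu: "card (U \<union> B (Suc N)) + card (U \<inter> B (Suc N)) = card U + card (B (Suc N))"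
    using card_Un_Int[OF fU assms] by simp
  have "U \<inter> B (Suc N) = (\<Union>j\<in>{1..N}. B j \<inter> B (Suc N))" unfolding U_def by auto
  then have "card (U \<inter> B (Suc N)) \<le> (\<Sum>j\<in>{1..N}. card (B j \<inter> B (Suc N)))"
    using card_UN_le[of "{1..N}" "\<lambda>j. B j \<inter> B (Suc N)"] by simp
  then have ci: "real (card (U \<inter> B (Suc N))) \<le> (\<Sum>j=1..<Suc N. real (card (B j \<inter> B (Suc N))))"
    by (metis atLeastLessThanSuc_atLeastAtMost of_nat_le_iff of_nat_sum)
  have "real (card (U \<union> B (Suc N))) + real (card (U \<inter> B (Suc N))) = real (card U) + real (card (B (Suc N)))"
    using cu by (metis of_nat_add)
  then show ?case using Suc.IH ci unfolding eq U_def[symmetric] by simp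
qed

lemma sum_km1: "(\<Sum>k=1..(N::nat). real k - 1) = real N * (real N - 1) / 2"
  by (induction N) (auto simp: field_simps)


lemma per_vs_bounds:
  assumes vs: "vs \<in> PiE {1..N} (\<lambda>_. cube n)" and nw: "noWN eps N vs"
  shows "real (card (\<Union>k\<in>{1..N}. hball eps (vs k))) \<le> real N * (Vol n eps * 2 ^ n)"
    and "real N * (Vol n eps * 2 ^ n) - Isec n eps (eps + 1) * 2 ^ n * (real N * (real N - 1) / 2)
         \<le> real (card (\<Union>k\<in>{1..N}. hball eps (vs k)))"
proof -
  have lk: "length (vs k) = n" if "k \<in> {1..N}" for k using vs that by (auto simp: PiE_def Pi_def cube_def)
  have b: "real (card (hball eps (vs k))) = Vol n eps * 2 ^ n" if "k \<in> {1..N}" for k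
    using card_hball[OF lk[OF that], of eps] by (simp add: Vol_def)
  have "card (\<Union>k\<in>{1..N}. hball eps (vs k)) \<le> (\<Sum>k\<in>{1..N}. card (hball eps (vs k)))"
    by (rule card_UN_le) simp
  then have "real (card (\<Union>k\<in>{1..N}. hball eps (vs k))) \<le> (\<Sum>k\<in>{1..N}. real (card (hball eps (vs k))))"
    by (metis of_nat_le_iff of_nat_sum)
  also have "\<dots> = real N * (Vol n eps * 2 ^ n)" using b by simp
  finally show "real (card (\<Union>k\<in>{1..N}. hball eps (vs k))) \<le> real N * (Vol n eps * 2 ^ n)" .
  define C where "C = Isec n eps (eps + 1) * 2 ^ n"
  have pair: "real (card (hball eps (vs j) \<inter> hball eps (vs k))) \<le> C" if "k \<in> {1..N}" "j \<in> {1..<k}" for j k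
  proof -
    have "k \<in> {2..N}" using that by auto
    then have "vs k \<notin> hball eps (vs j)" using nw that unfolding noWN_def by blast
    moreover have "length (vs k) = n" "length (vs j) = n" using that lk by auto
    ultimately have "eps < hamming (vs j) (vs k)" by (auto simp: hball_def)
    then show ?thesis unfolding C_def using ball_int_bound[of "vs j" n "vs k" eps] \<open>length (vs k) = n\<close> \<open>length (vs j) = n\<close> by simp
  qed
  have "(\<Sum>k=1..N. \<Sum>j=1..<k. real (card (hball eps (vs j) \<inter> hball eps (vs k)))) \<le> (\<Sum>k=1..N. (real k - 1) * C)"
  proof (rule sum_mono)
    fix k assume k: "k \<in> {1..N}"
    have "(\<Sum>j=1..<k. real (card (hball eps (vs j) \<inter> hball eps (vs k)))) \<le> (\<Sum>j=1..<k. C)"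
      by (rule sum_mono) (rule pair[OF k])
    also have "\<dots> = (real k - 1) * C" using k by (simp add: of_nat_diff)
    finally show "(\<Sum>j=1..<k. real (card (hball eps (vs j) \<inter> hball eps (vs k)))) \<le> (real k - 1) * C" .
  qed
  also have "\<dots> = C * (real N * (real N - 1) / 2)" proof -
    have "(\<Sum>k=1..N. (real k - 1) * C) = (\<Sum>k=1..N. real k - 1) * C" by (simp add: sum_distrib_right)
    then show ?thesis using sum_km1[of N] by simp
  qed
  finally have dbl: "(\<Sum>k=1..N. \<Sum>j=1..<k. real (card (hball eps (vs j) \<inter> hball eps (vs k)))) \<le> C * (real N * (real N - 1) / 2)" .
  have "(\<Sum>k=1..N. real (card (hball eps (vs k)))) = real N * (Vol n eps * 2 ^ n)" using b by simp
  then show "real N * (Vol n eps * 2 ^ n) - Isec n eps (eps + 1) * 2 ^ n * (real N * (real N - 1) / 2)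
         \<le> real (card (\<Union>k\<in>{1..N}. hball eps (vs k)))"
    using bonf[of "\<lambda>k. hball eps (vs k)" N] dbl finite_hball unfolding C_def by simp
qed


theorem lemma4p10:
  fixes n N eps :: nat
  defines "P \<equiv> pmf_of_set (templ_space n N)"
  defines "W \<equiv> {(vs, t) \<in> templ_space n N. noWN eps N vs}"
  defines "A \<equiv> {(vs, t) \<in> templ_space n N. t \<in> (\<Union>k\<in>{1..N}. hball eps (vs k))}"
  assumes pos: "measure_pmf.prob P W > 0"
  shows "real N * Vol n eps - Isec n eps (eps + 1) * (real N * (real N - 1) / 2)
           \<le> measure_pmf.prob P (A \<inter> W) / measure_pmf.prob P W
         \<and> measure_pmf.prob P (A \<inter> W) / measure_pmf.prob P W \<le> real N * Vol n eps"
proof -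
  define SV where "SV = PiE {1..N} (\<lambda>_. cube n)"
  define Wv where "Wv = {vs \<in> SV. noWN eps N vs}"
  define U where "U = (\<lambda>vs. \<Union>k\<in>{1..N}. hball eps (vs k))"
  define T where "T = templ_space n N"
  have cube_eq: "cube n = {xs. set xs \<subseteq> UNIV \<and> length xs = n}" by (auto simp: cube_def)
  have fc: "finite (cube n)" unfolding cube_eq by (rule finite_lists_length_eq) simp
  have cc: "card (cube n) = 2 ^ n" unfolding cube_eq using card_lists_length_eq[of "UNIV::bool set" n] by simp
  have fSV: "finite SV" unfolding SV_def using fc by (simp add: finite_PiE)
  have TT: "T = SV \<times> cube n" unfolding T_def SV_def templ_space_def by simp
  have fT: "finite T" using fSV fc TT by simp
  have "(\<lambda>k. if k \<in> {1..N} then replicate n False else undefined) \<in> SV" unfolding SV_def by (auto simp: cube_def)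
  moreover have "replicate n False \<in> cube n" by (simp add: cube_def)
  ultimately have neT: "T \<noteq> {}" using TT by blast
  have prob: "measure_pmf.prob P X = real (card (T \<inter> X)) / real (card T)" for X
    unfolding P_def T_def[symmetric] using measure_pmf_of_set[OF neT fT] by simp
  have Wd: "W = Wv \<times> cube n" unfolding W_def Wv_def templ_space_def SV_def by auto
  have Usub: "U vs \<subseteq> cube n" if "vs \<in> SV" for vs
    using that unfolding U_def SV_def by (auto simp: PiE_def Pi_def cube_def hball_def)
  have AW: "A \<inter> W = Sigma Wv U" unfolding A_def W_def Wv_def templ_space_def SV_def[symmetric]
    using Usub unfolding U_def by blast
  have WT: "T \<inter> W = W" "T \<inter> (A \<inter> W) = A \<inter> W" unfolding T_def W_def A_def by auto
  have fWv: "finite Wv" using fSV by (simp add: Wv_def)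
  have fU: "finite (U vs)" for vs unfolding U_def using finite_hball by simp
  have cW: "card W = card Wv * 2 ^ n" unfolding Wd using cc by (simp add: card_cartesian_product)
  have cAW: "card (A \<inter> W) = (\<Sum>vs\<in>Wv. card (U vs))" unfolding AW using fWv fU by simp
  have cT: "card T > 0" using fT neT by (simp add: card_gt_0_iff)
  have ratio: "measure_pmf.prob P (A \<inter> W) / measure_pmf.prob P W = real (card (A \<inter> W)) / real (card W)"
    unfolding prob WT using cT by simp
  have "card W > 0" using pos unfolding prob WT using cT by (simp add: zero_less_divide_iff)
  then have cWv: "real (card Wv) > 0" using cW by simp
  define L where "L = real N * (Vol n eps * 2 ^ n) - Isec n eps (eps + 1) * 2 ^ n * (real N * (real N - 1) / 2)"
  define R where "R = real N * (Vol n eps * 2 ^ n)"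
  have bnd: "L \<le> real (card (U vs)) \<and> real (card (U vs)) \<le> R" if "vs \<in> Wv" for vs
    using per_vs_bounds[of vs N n eps] that unfolding Wv_def SV_def U_def L_def R_def by auto
  have S: "real (card (A \<inter> W)) = (\<Sum>vs\<in>Wv. real (card (U vs)))" unfolding cAW by simp
  have lo: "real (card Wv) * L \<le> real (card (A \<inter> W))"
    unfolding S using sum_mono[of Wv "\<lambda>_. L" "\<lambda>vs. real (card (U vs))"] bnd by simp
  have hi: "real (card (A \<inter> W)) \<le> real (card Wv) * R"
    unfolding S using sum_mono[of Wv "\<lambda>vs. real (card (U vs))" "\<lambda>_. R"] bnd by simp
  have den: "real (card W) = real (card Wv) * 2 ^ n" using cW by simp
  have dpos: "real (card Wv) * 2 ^ n > 0" using cWv by simp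
  have "L / 2 ^ n = real N * Vol n eps - Isec n eps (eps + 1) * (real N * (real N - 1) / 2)"
    unfolding L_def by (simp add: field_simps)
  moreover have "R / 2 ^ n = real N * Vol n eps" unfolding R_def by simp
  moreover have "L / 2 ^ n \<le> real (card (A \<inter> W)) / (real (card Wv) * 2 ^ n)"
    using lo dpos cWv by (simp add: field_simps)
  moreover have "real (card (A \<inter> W)) / (real (card Wv) * 2 ^ n) \<le> R / 2 ^ n"
    using hi dpos cWv by (simp add: field_simps)
  ultimately show ?thesis unfolding ratio den by simp
qed

end
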